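(* Let $\phi:\mathcal{F}\to\mathbb{R}$ be any function, $\delta\in(0,1)$, $\epsilon_5:=2B_{\text{ref}}\sqrt{\frac{\log(2\delta^{-1})}{2n}}$, and $\hat a_-(\epsilon_5):=\min_{f\in\hat{\mathcal{R}}(\epsilon_5)}\phi(f)$, $\hat a_+(\epsilon_5):=\max_{f\in\hat{\mathcal{R}}(\epsilon_5)}\phi(f)$. If $|L(f,z)-L(f_{\text{ref}},z)|\le B_{\text{ref}}$ for all $z\in\mathcal{Z}$ and all $f\in\mathcal{R}(0)$, then $$\mathbb{P}\left[\{\phi(f):f\in\mathcal{R}(0)\}\subset[\hat a_-(\epsilon_5),\hat a_+(\epsilon_5)]\right]\ge1-\delta.$$
   Context: Let $Z$ be a random variable on $\mathcal{Z}=\mathcal{Y}\times\mathcal{X}$; $\mathcal{F}$ a set of measurable functions $\mathcal{X}\to\mathcal{Y}$; $L:\mathcal{F}\times\mathcal{Z}\to\mathbb{R}_{\ge0}$ a nonnegative loss; data are $n\ge2$ i.i.d. copies $Z_1,\dots,Z_n$ of $Z$. $e_{\text{orig}}(f)=\mathbb{E}L(f,Z)$, $\hat e_{\text{orig}}(f)=\frac1n\sum_iL(f,Z_i)$. A reference model $f_{\text{ref}}\in\mathcal{F}$ is fixed in advance. $\mathcal{R}(\epsilon)=\{f\in\mathcal{F}:e_{\text{orig}}(f)\le e_{\text{orig}}(f_{\text{ref}})+\epsilon\}$ and $\hat{\mathcal{R}}(\epsilon)=\{f_{\text{ref}}\}\cup\{f\in\mathcal{F}:\hat e_{\text{orig}}(f)\le\hat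 e_{\text{orig}}(f_{\text{ref}})+\epsilon\}$. All minima/maxima of $\phi$ over $\mathcal{R}(0)$ and $\hat{\mathcal{R}}(\epsilon_5)$ are assumed to be attained. *)

theory Defs
  imports "HOL-Probability.Probability"
begin

definition e_orig :: "('y \<times> 'x) measure \<Rightarrow> (('x \<Rightarrow> 'y) \<Rightarrow> 'y \<times> 'x \<Rightarrow> real) \<Rightarrow> ('x \<Rightarrow> 'y) \<Rightarrow> real" where
  "e_orig D L f = (\<integral>z. L f z \<partial>D)"

definition e_hat :: "(('x \<Rightarrow> 'y) \<Rightarrow> 'y \<times> 'x \<Rightarrow> real) \<Rightarrow> nat \<Rightarrow> (nat \<Rightarrow> 'y \<times> 'x) \<Rightarrow> ('x \<Rightarrow> 'y) \<Rightarrow> real" where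
  "e_hat L n S f = (\<Sum>i<n. L f (S i)) / real n"

definition R_set where
  "R_set F D L f_ref eps = {f \<in> F. e_orig D L f \<le> e_orig D L f_ref + eps}"

definition R_hat where
  "R_hat F L f_ref n S eps = insert f_ref {f \<in> F. e_hat L n S f \<le> e_hat L n S f_ref + eps}"

definition eps5 :: "real \<Rightarrow> real \<Rightarrow> nat \<Rightarrow> real" where
  "eps5 B \<delta> n = 2 * B * sqrt (ln (2 / \<delta>) / (2 * real n))"

end

theory Submission imports Defs begin

lemma indep_coords:
  assumes D: "prob_space D" and I: "I \<noteq> {}"
  shows "prob_space.indep_vars (PiM I (\<lambda>_. D)) (\<lambda>_. D) (\<lambda>i S. S i) I"
proof -
  interpret P: prob_space "PiM I (\<lambda>_. D)" by (intro prob_space_PiM D)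
  have "distr (PiM I (\<lambda>_. D)) (\<Pi>\<^sub>M i\<in>I. D) (\<lambda>x. \<lambda>i\<in>I. x i) = distr (PiM I (\<lambda>_. D)) (PiM I (\<lambda>_. D)) (\<lambda>x. x)"
    by (intro distr_cong) (auto simp: space_PiM PiE_def extensional_restrict)
  also have "\<dots> = PiM I (\<lambda>_. D)" by simp
  also have "\<dots> = (\<Pi>\<^sub>M i\<in>I. distr (PiM I (\<lambda>_. D)) D (\<lambda>S. S i))"
    by (intro PiM_cong refl) (subst distr_PiM_component[of I "\<lambda>_. D"], auto simp: D)
  finally show ?thesis
    by (subst P.indep_vars_iff_distr_eq_PiM'[OF I]) auto
qed

lemma hoeff_event:
  fixes g :: "'a \<Rightarrow> real"
  assumes D: "prob_space D" and n: "n > 0"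
    and g: "g \<in> borel_measurable D"
    and gb: "\<And>z. z \<in> space D \<Longrightarrow> \<bar>g z\<bar> \<le> B"
    and gi: "(\<integral>z. g z \<partial>D) \<le> 0"
    and \<delta>: "0 < \<delta>" "\<delta> < 1"
  shows "{S \<in> space (PiM {..<n} (\<lambda>_. D)). (\<Sum>i<n. g (S i)) \<le> real n * eps5 B \<delta> n} \<in> sets (PiM {..<n} (\<lambda>_. D))
       \<and> measure (PiM {..<n} (\<lambda>_. D)) {S \<in> space (PiM {..<n} (\<lambda>_. D)). (\<Sum>i<n. g (S i)) \<le> real n * eps5 B \<delta> n} \<ge> 1 - \<delta>/2"
proof -
  define P where "P = PiM {..<n} (\<lambda>_. D)"
  interpret P: prob_space P unfolding P_def by (intro prob_space_PiM D)
  interpret D: prob_space D by (rule D)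
  define G where "G = {S \<in> space P. (\<Sum>i<n. g (S i)) \<le> real n * eps5 B \<delta> n}"
  have comp: "(\<lambda>S. S i) \<in> measurable P D" if "i < n" for i
    unfolding P_def using that by (intro measurable_component_singleton) auto
  have Xm: "(\<lambda>S. g (S i)) \<in> borel_measurable P" if "i < n" for i
    using measurable_comp[OF comp[OF that] g] by (simp add: comp_def)
  have sm[measurable]: "(\<lambda>S. \<Sum>i<n. g (S i)) \<in> borel_measurable P"
    using Xm by (intro borel_measurable_sum) auto
  have Gs: "G \<in> sets P" unfolding G_def by measurable
  have ne: "space D \<noteq> {}" by (rule D.not_empty)
  then obtain z0 where "z0 \<in> space D" by auto
  from gb[OF this] have B0: "B \<ge> 0" by linarith
  have spc: "S i \<in> space D" if "S \<in> space P" "i < n" for S i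
    using that by (auto simp: P_def space_PiM)
  have "P.prob G \<ge> 1 - \<delta>/2"
  proof (cases "B = 0")
    case True
    have "G = space P" unfolding G_def
      using gb spc True by (auto simp: eps5_def intro!: sum_nonpos)
    then show ?thesis using \<delta> by (simp add: P.prob_space)
  next
    case False
    with B0 have Bp: "B > 0" by simp
    define \<mu> where "\<mu> = (\<Sum>i<n. P.expectation (\<lambda>S. g (S i)))"
    interpret H: Hoeffding_ineq P "{..<n}" "\<lambda>i S. g (S i)" "\<lambda>_. -B" "\<lambda>_. B" \<mu>
    proof unfold_locales
      show "finite {..<n}" by simp
      show "P.indep_vars (\<lambda>_. borel) (\<lambda>i S. g (S i)) {..<n}"
      proof -
        have "P.indep_vars (\<lambda>_. D) (\<lambda>i S. S i) {..<n}"
          using indep_coords[OF D, of "{..<n}"] n unfolding P_def by auto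
        from P.indep_vars_compose2[OF this, of "\<lambda>_. g" "\<lambda>_. borel"] g
        show ?thesis by auto
      qed
      fix i assume "i \<in> {..<n}"
      then show "AE x in P. g (x i) \<in> {-B..B}"
        using gb spc by (intro AE_I2) (force simp: abs_le_iff)
    qed (simp add: \<mu>_def)
    have ex: "P.expectation (\<lambda>S. g (S i)) = (\<integral>z. g z \<partial>D)" if "i < n" for i
    proof -
      have "(\<integral>z. g z \<partial>D) = (\<integral>z. g z \<partial>distr P D (\<lambda>S. S i))"
        unfolding P_def using that by (subst distr_PiM_component[of "{..<n}" "\<lambda>_. D"]) (auto simp: D)
      also have "\<dots> = P.expectation (\<lambda>S. g (S i))"
        by (rule integral_distr[OF comp[OF that] g])
      finally show ?thesis by simp
    qed
    have mu: "\<mu> \<le> 0" unfolding \<mu>_def using ex gi by (simp add: mult_nonneg_nonpos)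
    define e where "e = real n * eps5 B \<delta> n"
    have e0: "e \<ge> 0" unfolding e_def eps5_def using B0 \<delta> by (auto intro!: mult_nonneg_nonneg)
    have pos: "(\<Sum>i<n. (B - - B)\<^sup>2) > 0" using n Bp by simp
    have hb: "P.prob {x\<in>space P. (\<Sum>i<n. g (x i)) \<ge> \<mu> + e} \<le> exp (-2 * e\<^sup>2 / (\<Sum>i<n. (B - - B)\<^sup>2))"
      using H.Hoeffding_ineq_ge[OF e0 pos] by simp
    have lnp: "ln (2/\<delta>) \<ge> 0" using \<delta> by simp
    have "e\<^sup>2 = real n ^ 2 * (4 * B^2 * (ln (2 / \<delta>) / (2 * real n)))"
      unfolding e_def eps5_def using lnp n
      by (simp add: power_mult_distrib real_sqrt_pow2)
    also have "\<dots> = real n * 2 * B^2 * ln (2/\<delta>)" using n by (simp add: field_simps power2_eq_square)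
    finally have e2: "e\<^sup>2 = real n * 2 * B^2 * ln (2/\<delta>)" .
    have "-2 * e\<^sup>2 / (\<Sum>i<n. (B - - B)\<^sup>2) = - ln (2/\<delta>)"
      using e2 n Bp by (simp add: field_simps power2_eq_square)
    then have "exp (-2 * e\<^sup>2 / (\<Sum>i<n. (B - - B)\<^sup>2)) = \<delta>/2"
      using \<delta> by (simp add: exp_minus)
    with hb have hb2: "P.prob {x\<in>space P. (\<Sum>i<n. g (x i)) \<ge> \<mu> + e} \<le> \<delta>/2" by simp
    have "space P - G \<subseteq> {x\<in>space P. (\<Sum>i<n. g (x i)) \<ge> \<mu> + e}"
      unfolding G_def e_def using mu by auto
    moreover have "{x\<in>space P. (\<Sum>i<n. g (x i)) \<ge> \<mu> + e} \<in> sets P" by measurable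
    ultimately have "P.prob (space P - G) \<le> \<delta>/2"
      using hb2 P.finite_measure_mono order_trans by blast
    then show ?thesis using P.prob_compl[OF Gs] by simp
  qed
  then show ?thesis using Gs unfolding G_def P_def by simp
qed

theorem proposition12:
  fixes D :: "('y \<times> 'x) measure"
    and F :: "('x \<Rightarrow> 'y) set"
    and L :: "('x \<Rightarrow> 'y) \<Rightarrow> 'y \<times> 'x \<Rightarrow> real"
    and f_ref :: "'x \<Rightarrow> 'y"
    and \<phi> :: "('x \<Rightarrow> 'y) \<Rightarrow> real"
    and n :: nat and \<delta> B_ref :: real
  assumes D: "prob_space D"
    and n: "n \<ge> 2"
    and L_nonneg: "\<And>f z. f \<in> F \<Longrightarrow> z \<in> space D \<Longrightarrow> L f z \<ge> 0"
    and L_int: "\<And>f. f \<in> F \<Longrightarrow> integrable D (L f)"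
    and f_ref: "f_ref \<in> F"
    and \<delta>: "0 < \<delta>" "\<delta> < 1"
    and bound: "\<And>f z. f \<in> R_set F D L f_ref 0 \<Longrightarrow> z \<in> space D \<Longrightarrow>
                  \<bar>L f z - L f_ref z\<bar> \<le> B_ref"
    and R0_min: "\<exists>g\<in>R_set F D L f_ref 0. \<forall>f\<in>R_set F D L f_ref 0. \<phi> g \<le> \<phi> f"
    and R0_max: "\<exists>g\<in>R_set F D L f_ref 0. \<forall>f\<in>R_set F D L f_ref 0. \<phi> f \<le> \<phi> g"
    and Rhat_min: "\<And>S. S \<in> space (PiM {..<n} (\<lambda>_. D)) \<Longrightarrow>
        \<exists>g\<in>R_hat F L f_ref n S (eps5 B_ref \<delta> n). \<forall>f\<in>R_hat F L f_ref n S (eps5 B_ref \<delta> n). \<phi> g \<le> \<phi> f"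
    and Rhat_max: "\<And>S. S \<in> space (PiM {..<n} (\<lambda>_. D)) \<Longrightarrow>
        \<exists>g\<in>R_hat F L f_ref n S (eps5 B_ref \<delta> n). \<forall>f\<in>R_hat F L f_ref n S (eps5 B_ref \<delta> n). \<phi> f \<le> \<phi> g"
  shows "\<exists>A \<in> sets (PiM {..<n} (\<lambda>_. D)).
           A \<subseteq> {S \<in> space (PiM {..<n} (\<lambda>_. D)).
                   \<phi> ` R_set F D L f_ref 0 \<subseteq>
                     {Inf (\<phi> ` R_hat F L f_ref n S (eps5 B_ref \<delta> n)) ..
                      Sup (\<phi> ` R_hat F L f_ref n S (eps5 B_ref \<delta> n))}}
         \<and> measure (PiM {..<n} (\<lambda>_. D)) A \<ge> 1 - \<delta>"
proof -
  define P where "P = PiM {..<n} (\<lambda>_. D)"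
  interpret P: prob_space P unfolding P_def by (intro prob_space_PiM D)
  interpret D: prob_space D by (rule D)
  define R0 where "R0 = R_set F D L f_ref 0"
  define e5 where "e5 = eps5 B_ref \<delta> n"
  define E where "E f = {S \<in> space P. (\<Sum>i<n. L f (S i) - L f_ref (S i)) \<le> real n * e5}" for f
  have n0: "n > 0" using n by simp
  have Eok: "E f \<in> sets P \<and> P.prob (E f) \<ge> 1 - \<delta>/2" if f: "f \<in> R0" for f
  proof -
    have fF: "f \<in> F" and ef: "e_orig D L f \<le> e_orig D L f_ref"
      using f unfolding R0_def R_set_def by auto
    have gm: "(\<lambda>z. L f z - L f_ref z) \<in> borel_measurable D"
      using L_int[OF fF] L_int[OF f_ref] by (intro borel_measurable_diff) auto
    have gi: "(\<integral>z. L f z - L f_ref z \<partial>D) \<le> 0"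
      using ef L_int[OF fF] L_int[OF f_ref] unfolding e_orig_def by simp
    have gb: "\<bar>L f z - L f_ref z\<bar> \<le> B_ref" if "z \<in> space D" for z
      using bound[OF f[unfolded R0_def] that] .
    from hoeff_event[OF D n0 gm gb gi \<delta>] show ?thesis
      unfolding E_def P_def e5_def by simp
  qed
  have EinR: "f \<in> R_hat F L f_ref n S e5" if f: "f \<in> R0" and S: "S \<in> E f" for f S
  proof -
    have fF: "f \<in> F" using f unfolding R0_def R_set_def by auto
    have "(\<Sum>i<n. L f (S i)) - (\<Sum>i<n. L f_ref (S i)) \<le> real n * e5"
      using S unfolding E_def by (simp add: sum_subtractf)
    then have "(\<Sum>i<n. L f (S i)) / real n \<le> (\<Sum>i<n. L f_ref (S i)) / real n + e5"
      using n0 by (simp add: field_simps)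
    then show ?thesis using fF unfolding R_hat_def e_hat_def by auto
  qed
  obtain gmin where gmin: "gmin \<in> R0" "\<And>f. f \<in> R0 \<Longrightarrow> \<phi> gmin \<le> \<phi> f"
    using R0_min unfolding R0_def by blast
  obtain gmax where gmax: "gmax \<in> R0" "\<And>f. f \<in> R0 \<Longrightarrow> \<phi> f \<le> \<phi> gmax"
    using R0_max unfolding R0_def by blast
  define A where "A = E gmin \<inter> E gmax"
  have As: "A \<in> sets P" unfolding A_def using Eok gmin gmax by auto
  have "space P - A = (space P - E gmin) \<union> (space P - E gmax)" unfolding A_def by auto
  then have "P.prob (space P - A) \<le> P.prob (space P - E gmin) + P.prob (space P - E gmax)"
    using Eok gmin gmax by (simp add: measure_Un_le sets.Diff)
  also have "\<dots> \<le> \<delta>/2 + \<delta>/2"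
    using Eok[OF gmin(1)] Eok[OF gmax(1)] P.prob_compl by (intro add_mono) auto
  finally have mA: "P.prob A \<ge> 1 - \<delta>" using P.prob_compl[OF As] by simp
  have sub: "A \<subseteq> {S \<in> space P. \<phi> ` R0 \<subseteq> {Inf (\<phi> ` R_hat F L f_ref n S e5) .. Sup (\<phi> ` R_hat F L f_ref n S e5)}}"
  proof
    fix S assume S: "S \<in> A"
    have SP: "S \<in> space P" using S unfolding A_def E_def by auto
    have Ssp: "S \<in> space (PiM {..<n} (\<lambda>_. D))" using SP unfolding P_def .
    have i1: "gmin \<in> R_hat F L f_ref n S e5" using EinR gmin S unfolding A_def by auto
    have i2: "gmax \<in> R_hat F L f_ref n S e5" using EinR gmax S unfolding A_def by auto
    obtain a where a: "\<forall>f\<in>R_hat F L f_ref n S e5. \<phi> a \<le> \<phi> f"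
      using Rhat_min[OF Ssp] unfolding e5_def by blast
    obtain b where b: "\<forall>f\<in>R_hat F L f_ref n S e5. \<phi> f \<le> \<phi> b"
      using Rhat_max[OF Ssp] unfolding e5_def by blast
    have bb: "bdd_below (\<phi> ` R_hat F L f_ref n S e5)" using a by (auto intro!: bdd_belowI)
    have ba: "bdd_above (\<phi> ` R_hat F L f_ref n S e5)" using b by (auto intro!: bdd_aboveI)
    have "\<phi> f \<in> {Inf (\<phi> ` R_hat F L f_ref n S e5) .. Sup (\<phi> ` R_hat F L f_ref n S e5)}" if f: "f \<in> R0" for f
    proof -
    have "Inf (\<phi> ` R_hat F L f_ref n S e5) \<le> \<phi> gmin" using i1 bb by (intro cInf_lower) auto
    also have "\<dots> \<le> \<phi> f" using gmin f by auto
    finally have lo: "\<phi> f \<ge> Inf (\<phi> ` R_hat F L f_ref n S e5)" .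
    have "\<phi> f \<le> \<phi> gmax" using gmax f by auto
    also have "\<dots> \<le> Sup (\<phi> ` R_hat F L f_ref n S e5)" using i2 ba by (intro cSup_upper) auto
    finally have "\<phi> f \<le> Sup (\<phi> ` R_hat F L f_ref n S e5)" .
    with lo show ?thesis by simp
    qed
    then show "S \<in> {S \<in> space P. \<phi> ` R0 \<subseteq> {Inf (\<phi> ` R_hat F L f_ref n S e5) .. Sup (\<phi> ` R_hat F L f_ref n S e5)}}"
      using SP by auto
  qed
  show ?thesis using As mA sub unfolding P_def R0_def e5_def by blast
qed

end
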